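(* Let $D$ be an integral domain and $D\subseteq T\subseteq S$ overrings of $D$. (b) Let $\star,\star',\star''$ be semistar operations on $D,T,S$ respectively. If $S$ is $(\star',\star'')$-flat over $T$ and $T$ is $(\star,\star')$-flat over $D$, then $S$ is $(\star,\star'')$-flat over $D$. (e) Let $\star_1,\star_2$ be semistar operations on $D$ with $(\star_1)_f\le(\star_2)_f$ and $\star'$ a semistar operation on $T$. If $T$ is $(\star_2,\star')$-flat over $D$, then $T$ is $(\star_1,\star')$-flat over $D$. In particular, if $\star$ is a semistar operation on $D$ with $D^\star=D$, then $T$ is $t$-flat over $(D,\star)$ if and only if $T$ is $t$-flat over $D$. (h) Let $\star,\star',\star''$ be semistar operations on $D,T,S$ respectively, and assume $S$ is $(\star,\star'')$-flat over $D$. Then $S$ is $(\star',\star'')$-flat over $T$ if and only if $S$ is $(\star',\star'')$-linked to $T$.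
   Context: Let $D$ be an integral domain with quotient field $K$. $\overline{\mathbf F}(D)$ denotes the set of all nonzero $D$-submodules of $K$ and $\mathbf f(D)$ the set of nonzero finitely generated $D$-submodules of $K$. A semistar operation on $D$ is a map $\star:\overline{\mathbf F}(D)\to\overline{\mathbf F}(D)$, $E\mapsto E^\star$, such that for all $0\ne x\in K$ and $E,F\in\overline{\mathbf F}(D)$: (1) $(xE)^\star=xE^\star$; (2) $E\subseteq F\Rightarrow E^\star\subseteq F^\star$; (3) $E\subseteq E^\star$ and $(E^\star)^\star=E^\star$. $\star_1\le\star_2$ means $E^{\star_1}\subseteq E^{\star_2}$ for all $E$. $\star_f$ is defined by $E^{\star_f}=\bigcup\{F^\star:F\in\mathbf f(D),F\subseteq E\}$. A nonzero ideal $I$ of $D$ is a quasi-$\star$-ideal if $I^\star\cap D=I$; a quasi-$\star$-prime is a prime quasi-$\star$-ideal. An overring of $D$ is a ring $T$ with $D\subseteq T\subseteq K$; all notions are defined analogously on $T$ (and on overrings of $T$ relative to $T$). For an overring $T$, $v_T$ is $E\mapsto(T:_K(T:_KE))$ and $t_T:=(v_T)_f$. $T$ is $(\star,\star')$-linked to $D$ if for every nonzero finitely generated ideal $F\subseteq D$ with $F^\star=D^\star$ one has $(FT)^{\star'}=T^{\star'}$. $T$ is $(\star,\star')$-flat over $D$ if $T$ is $(\star,\star')$-linked to $D$ and $D_{Q\cap D}=T_Q$ for every quasi-$\star'_f$-prime ideal $Q$ of $T$. $T$ is $t$-flat over $(D,\star)$ if it is $(\star,t_T)$-flat over $D$, and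 $t$-flat over $D$ if it is $(t_D,t_T)$-flat over $D$. *)

theory Defs
  imports Main
begin

text \<open>Convention: the quotient field K of D is the whole type 'a (a field).
  Rings D, T, S are subsets of 'a; D-submodules of K are subsets of 'a.\<close>

definition subring :: "'a::field set \<Rightarrow> bool" where
  "subring R \<longleftrightarrow> 0 \<in> R \<and> 1 \<in> R \<and> (\<forall>x\<in>R. \<forall>y\<in>R. x + y \<in> R \<and> x - y \<in> R \<and> x * y \<in> R)"

definition quotient_field_is_UNIV :: "'a::field set \<Rightarrow> bool" where
  "quotient_field_is_UNIV D \<longleftrightarrow> (\<forall>x. \<exists>a\<in>D. \<exists>b\<in>D. b \<noteq> 0 \<and> x = a / b)"

definition overring :: "'a::field set \<Rightarrow> 'a set \<Rightarrow> bool" where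
  "overring D T \<longleftrightarrow> subring T \<and> D \<subseteq> T"

definition is_submod :: "'a::field set \<Rightarrow> 'a set \<Rightarrow> bool" where
  "is_submod R E \<longleftrightarrow> 0 \<in> E \<and> (\<forall>x\<in>E. \<forall>y\<in>E. x + y \<in> E) \<and> (\<forall>r\<in>R. \<forall>x\<in>E. r * x \<in> E)"

definition Fbar :: "'a::field set \<Rightarrow> 'a set set" where
  "Fbar R = {E. is_submod R E \<and> E \<noteq> {0}}"

definition generated :: "'a::field set \<Rightarrow> 'a set \<Rightarrow> 'a set" where
  "generated R X = \<Inter>{E. is_submod R E \<and> X \<subseteq> E}"

definition ffg :: "'a::field set \<Rightarrow> 'a set set" where
  "ffg R = {F. (\<exists>G. finite G \<and> F = generated R G) \<and> F \<noteq> {0}}"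

definition semistar :: "'a::field set \<Rightarrow> ('a set \<Rightarrow> 'a set) \<Rightarrow> bool" where
  "semistar R st \<longleftrightarrow>
     (\<forall>E\<in>Fbar R. st E \<in> Fbar R) \<and>
     (\<forall>E\<in>Fbar R. \<forall>x. x \<noteq> 0 \<longrightarrow> st ((\<lambda>y. x * y) ` E) = (\<lambda>y. x * y) ` st E) \<and>
     (\<forall>E\<in>Fbar R. \<forall>F\<in>Fbar R. E \<subseteq> F \<longrightarrow> st E \<subseteq> st F) \<and>
     (\<forall>E\<in>Fbar R. E \<subseteq> st E \<and> st (st E) = st E)"

definition star_le :: "'a::field set \<Rightarrow> ('a set \<Rightarrow> 'a set) \<Rightarrow> ('a set \<Rightarrow> 'a set) \<Rightarrow> bool" where
  "star_le R st1 st2 \<longleftrightarrow> (\<forall>E\<in>Fbar R. st1 E \<subseteq> st2 E)"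

definition star_f :: "'a::field set \<Rightarrow> ('a set \<Rightarrow> 'a set) \<Rightarrow> 'a set \<Rightarrow> 'a set" where
  "star_f R st E = \<Union>{st F | F. F \<in> ffg R \<and> F \<subseteq> E}"

definition colon :: "'a::field set \<Rightarrow> 'a set \<Rightarrow> 'a set" where
  "colon T E = {x. \<forall>e\<in>E. x * e \<in> T}"

definition v_op :: "'a::field set \<Rightarrow> 'a set \<Rightarrow> 'a set" where
  "v_op T E = colon T (colon T E)"

definition t_op :: "'a::field set \<Rightarrow> 'a set \<Rightarrow> 'a set" where
  "t_op T = star_f T (v_op T)"

definition prime_ideal :: "'a::field set \<Rightarrow> 'a set \<Rightarrow> bool" where
  "prime_ideal R P \<longleftrightarrow> P \<subseteq> R \<and> is_submod R P \<and> P \<noteq> R \<and>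
     (\<forall>a\<in>R. \<forall>b\<in>R. a * b \<in> P \<longrightarrow> a \<in> P \<or> b \<in> P)"

definition quasi_prime :: "'a::field set \<Rightarrow> ('a set \<Rightarrow> 'a set) \<Rightarrow> 'a set \<Rightarrow> bool" where
  "quasi_prime R st Q \<longleftrightarrow> prime_ideal R Q \<and> Q \<noteq> {0} \<and> st Q \<inter> R = Q"

definition loc :: "'a::field set \<Rightarrow> 'a set \<Rightarrow> 'a set" where
  "loc R P = {a / s | a s. a \<in> R \<and> s \<in> R \<and> s \<notin> P}"

definition linked :: "'a::field set \<Rightarrow> 'a set \<Rightarrow> ('a set \<Rightarrow> 'a set) \<Rightarrow> ('a set \<Rightarrow> 'a set) \<Rightarrow> bool" where
  "linked D T st st' \<longleftrightarrow>
     (\<forall>F\<in>ffg D. F \<subseteq> D \<longrightarrow> st F = st D \<longrightarrow> st' (generated T F) = st' T)"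

definition flat :: "'a::field set \<Rightarrow> 'a set \<Rightarrow> ('a set \<Rightarrow> 'a set) \<Rightarrow> ('a set \<Rightarrow> 'a set) \<Rightarrow> bool" where
  "flat D T st st' \<longleftrightarrow> linked D T st st' \<and>
     (\<forall>Q. quasi_prime T (star_f T st') Q \<longrightarrow> loc D (Q \<inter> D) = loc T Q)"

end

theory Submission
  imports Defs
begin


lemma gen_submod: "is_submod R (generated R X)"
  unfolding generated_def is_submod_def by auto

lemma gen_sup: "X \<subseteq> generated R X"
  unfolding generated_def by auto

lemma gen_least: "is_submod R E \<Longrightarrow> X \<subseteq> E \<Longrightarrow> generated R X \<subseteq> E"
  unfolding generated_def by auto

lemma gen_mono: "X \<subseteq> Y \<Longrightarrow> generated R X \<subseteq> generated R Y"
  by (meson gen_least gen_submod gen_sup order_trans)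

lemma ffg_Fbar: "F \<in> ffg R \<Longrightarrow> F \<in> Fbar R"
  unfolding ffg_def Fbar_def using gen_submod by auto

lemma ffgI: "finite G \<Longrightarrow> generated R G \<noteq> {0} \<Longrightarrow> generated R G \<in> ffg R"
  unfolding ffg_def by auto

lemma gen_nonzero: "x \<in> X \<Longrightarrow> x \<noteq> 0 \<Longrightarrow> generated R X \<noteq> {0}"
  using gen_sup by blast

lemma submod_mult: "is_submod R E \<Longrightarrow> r \<in> R \<Longrightarrow> x \<in> E \<Longrightarrow> r * x \<in> E"
  unfolding is_submod_def by auto
lemma submod_add: "is_submod R E \<Longrightarrow> x \<in> E \<Longrightarrow> y \<in> E \<Longrightarrow> x + y \<in> E"
  unfolding is_submod_def by auto
lemma submod_0: "is_submod R E \<Longrightarrow> 0 \<in> E"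
  unfolding is_submod_def by auto

lemma submod_mono: "is_submod S E \<Longrightarrow> T \<subseteq> S \<Longrightarrow> is_submod T E"
  unfolding is_submod_def by auto

lemma Fbar_submod: "E \<in> Fbar R \<Longrightarrow> is_submod R E"
  unfolding Fbar_def by auto

lemma semistar_Fbar: "semistar R st \<Longrightarrow> E \<in> Fbar R \<Longrightarrow> st E \<in> Fbar R"
  unfolding semistar_def by auto
lemma semistar_mono: "semistar R st \<Longrightarrow> E \<in> Fbar R \<Longrightarrow> F \<in> Fbar R \<Longrightarrow> E \<subseteq> F \<Longrightarrow> st E \<subseteq> st F"
  unfolding semistar_def by auto
lemma semistar_ext: "semistar R st \<Longrightarrow> E \<in> Fbar R \<Longrightarrow> E \<subseteq> st E"
  unfolding semistar_def by auto
lemma semistar_idem: "semistar R st \<Longrightarrow> E \<in> Fbar R \<Longrightarrow> st (st E) = st E"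
  unfolding semistar_def by auto
lemma semistar_scale: "semistar R st \<Longrightarrow> E \<in> Fbar R \<Longrightarrow> x \<noteq> 0 \<Longrightarrow> st ((\<lambda>y. x * y) ` E) = (\<lambda>y. x * y) ` st E"
  unfolding semistar_def by auto

lemma semistar_submod: "semistar R st \<Longrightarrow> E \<in> Fbar R \<Longrightarrow> is_submod R (st E)"
  using semistar_Fbar Fbar_submod by blast

lemma star_f_ffg: "semistar R st \<Longrightarrow> F \<in> ffg R \<Longrightarrow> star_f R st F = st F"
  unfolding star_f_def using ffg_Fbar semistar_mono by fastforce

lemma star_fI: "x \<in> st F \<Longrightarrow> F \<in> ffg R \<Longrightarrow> F \<subseteq> E \<Longrightarrow> x \<in> star_f R st E"
  unfolding star_f_def by blast

lemma star_fE: "x \<in> star_f R st E \<Longrightarrow> (\<And>F. x \<in> st F \<Longrightarrow> F \<in> ffg R \<Longrightarrow> F \<subseteq> E \<Longrightarrow> P) \<Longrightarrow> P"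
  unfolding star_f_def by blast

lemma star_f_mono: "E \<subseteq> E' \<Longrightarrow> star_f R st E \<subseteq> star_f R st E'"
proof
  fix x assume EE: "E \<subseteq> E'" and x: "x \<in> star_f R st E"
  obtain F where F: "x \<in> st F" "F \<in> ffg R" "F \<subseteq> E" using x by (rule star_fE)
  show "x \<in> star_f R st E'" by (rule star_fI[where st=st and F=F, OF F(1) F(2)]) (use F(3) EE in auto)
qed

lemma star_f_star_f: "star_f R (star_f R st) = star_f R st"
proof (intro ext equalityI subsetI)
  fix E x assume "x \<in> star_f R (star_f R st) E"
  then obtain F where "x \<in> star_f R st F" "F \<subseteq> E" by (rule star_fE)
  obtain G where G: "x \<in> st G" "G \<in> ffg R" "G \<subseteq> F" using \<open>x \<in> star_f R st F\<close> by (rule star_fE)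
  show "x \<in> star_f R st E" by (rule star_fI[where st=st and F=G, OF G(1) G(2)]) (use G(3) \<open>F \<subseteq> E\<close> in auto)
next
  fix E x assume "x \<in> star_f R st E"
  then obtain F where "x \<in> st F" "F \<in> ffg R" "F \<subseteq> E" by (rule star_fE)
  have "x \<in> star_f R st F" by (rule star_fI[where st=st and F=F, OF \<open>x \<in> st F\<close> \<open>F \<in> ffg R\<close>]) simp
  then show "x \<in> star_f R (star_f R st) E" by (rule star_fI[where st="star_f R st" and F=F, OF _ \<open>F \<in> ffg R\<close> \<open>F \<subseteq> E\<close>])
qed

lemma subring_1: "subring R \<Longrightarrow> 1 \<in> R"
  unfolding subring_def by auto
lemma subring_0: "subring R \<Longrightarrow> 0 \<in> R"
  unfolding subring_def by auto
lemma subring_mult: "subring R \<Longrightarrow> x \<in> R \<Longrightarrow> y \<in> R \<Longrightarrow> x * y \<in> R"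
  unfolding subring_def by auto
lemma subring_add: "subring R \<Longrightarrow> x \<in> R \<Longrightarrow> y \<in> R \<Longrightarrow> x + y \<in> R"
  unfolding subring_def by auto
lemma subring_submod: "subring R \<Longrightarrow> is_submod R R"
  unfolding subring_def is_submod_def by auto

lemma gen_one: "subring R \<Longrightarrow> generated R {1} = R"
proof
  assume R: "subring R"
  show "generated R {1} \<subseteq> R" using R by (simp add: gen_least subring_1 subring_submod)
  show "R \<subseteq> generated R {1}"
  proof
    fix r assume "r \<in> R"
    then have "r * 1 \<in> generated R {1}" using submod_mult[OF gen_submod] gen_sup by blast
    then show "r \<in> generated R {1}" by simp
  qed
qed

lemma R_ffg: "subring R \<Longrightarrow> R \<in> ffg R"
  by (metis finite.emptyI finite.insertI ffgI gen_one gen_nonzero insertI1 one_neq_zero)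

lemma R_Fbar: "subring R \<Longrightarrow> R \<in> Fbar R"
  using R_ffg ffg_Fbar by blast

lemma scale_submod: "is_submod R E \<Longrightarrow> is_submod R ((\<lambda>y. b * y) ` E)"
  unfolding is_submod_def
proof (intro conjI ballI)
  assume E: "0 \<in> E \<and> (\<forall>x\<in>E. \<forall>y\<in>E. x + y \<in> E) \<and> (\<forall>r\<in>R. \<forall>x\<in>E. r * x \<in> E)"
  show "0 \<in> (\<lambda>y. b * y) ` E" using E by (intro image_eqI[of _ _ 0]) auto
  fix x y assume "x \<in> (\<lambda>y. b * y) ` E" "y \<in> (\<lambda>y. b * y) ` E"
  then obtain x' y' where "x' \<in> E" "y' \<in> E" "x = b * x'" "y = b * y'" by blast
  then show "x + y \<in> (\<lambda>y. b * y) ` E" using E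
    by (intro image_eqI[of _ _ "x' + y'"]) (auto simp: distrib_left)
next
  assume E: "0 \<in> E \<and> (\<forall>x\<in>E. \<forall>y\<in>E. x + y \<in> E) \<and> (\<forall>r\<in>R. \<forall>x\<in>E. r * x \<in> E)"
  fix r x assume "r \<in> R" "x \<in> (\<lambda>y. b * y) ` E"
  then obtain x' where "x' \<in> E" "x = b * x'" by blast
  then show "r * x \<in> (\<lambda>y. b * y) ` E" using E \<open>r \<in> R\<close>
    by (intro image_eqI[of _ _ "r * x'"]) (auto simp: mult.left_commute)
qed

lemma scale_gen_sub: "(\<lambda>y. c * y) ` generated R X \<subseteq> generated R ((\<lambda>y. c * y) ` X)"
proof -
  let ?G = "generated R ((\<lambda>y. c * y) ` X)"
  have G: "is_submod R ?G" by (rule gen_submod)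
  have "is_submod R {y. c * y \<in> ?G}"
    unfolding is_submod_def
  proof (intro conjI ballI)
    show "0 \<in> {y. c * y \<in> ?G}" using submod_0[OF G] by simp
    fix x y assume "x \<in> {y. c * y \<in> ?G}" "y \<in> {y. c * y \<in> ?G}"
    then show "x + y \<in> {y. c * y \<in> ?G}" using submod_add[OF G, of "c*x" "c*y"] by (simp add: distrib_left)
  next
    fix r x assume "r \<in> R" "x \<in> {y. c * y \<in> ?G}"
    then show "r * x \<in> {y. c * y \<in> ?G}" using submod_mult[OF G, of r "c*x"] by (simp add: mult.left_commute)
  qed
  moreover have "X \<subseteq> {y. c * y \<in> ?G}"
    using gen_sup by blast
  ultimately have "generated R X \<subseteq> {y. c * y \<in> ?G}"
    by (rule gen_least)
  then show ?thesis unfolding image_subset_iff by (simp add: subset_iff)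
qed

lemma scale_gen: "(b::'a::field) \<noteq> 0 \<Longrightarrow> (\<lambda>y. b * y) ` generated R X = generated R ((\<lambda>y. b * y) ` X)"
proof
  assume b: "b \<noteq> 0"
  show "(\<lambda>y. b * y) ` generated R X \<subseteq> generated R ((\<lambda>y. b * y) ` X)" by (rule scale_gen_sub)
  have h0: "(\<lambda>y. inverse b * y) ` generated R ((\<lambda>y. b * y) ` X) \<subseteq> generated R ((\<lambda>y. inverse b * y) ` ((\<lambda>y. b * y) ` X))"
    by (rule scale_gen_sub)
  have e: "\<And>y. inverse b * (b * y) = y" using b by (simp add: field_simps)
  have h1: "(\<lambda>y. inverse b * y) ` ((\<lambda>y. b * y) ` X) = X" by (simp add: image_image e)
  have h: "(\<lambda>y. inverse b * y) ` generated R ((\<lambda>y. b * y) ` X) \<subseteq> generated R X" using h0 h1 by simp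
  show "generated R ((\<lambda>y. b * y) ` X) \<subseteq> (\<lambda>y. b * y) ` generated R X"
  proof
    fix z assume "z \<in> generated R ((\<lambda>y. b * y) ` X)"
    then have "inverse b * z \<in> generated R X" using h by blast
    then show "z \<in> (\<lambda>y. b * y) ` generated R X" using b by (auto simp: image_iff intro!: bexI[of _ "inverse b * z"])
  qed
qed



lemma fin_decomp:
  assumes "finite G" "G \<subseteq> {m + x * t | m t. m \<in> M \<and> t \<in> T}"
  shows "\<exists>H. finite H \<and> H \<subseteq> M \<and> G \<subseteq> generated T (insert x H)"
  using assms
proof (induction G rule: finite_induct)
  case empty
  then show ?case by auto
next
  case (insert g G)
  then obtain H where H: "finite H" "H \<subseteq> M" "G \<subseteq> generated T (insert x H)" by auto
  from insert.prems obtain m t where mt: "g = m + x * t" "m \<in> M" "t \<in> T" by auto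
  let ?H = "insert m H"
  have "G \<subseteq> generated T (insert x ?H)" using H(3) gen_mono[of "insert x H" "insert x ?H" T] by blast
  moreover have "g \<in> generated T (insert x ?H)"
  proof -
    have S: "is_submod T (generated T (insert x ?H))" by (rule gen_submod)
    have "m \<in> generated T (insert x ?H)" using gen_sup[of "insert x ?H" T] by blast
    moreover have "x \<in> generated T (insert x ?H)" using gen_sup[of "insert x ?H" T] by blast
    then have "t * x \<in> generated T (insert x ?H)" using submod_mult[OF S mt(3)] by blast
    ultimately show ?thesis using submod_add[OF S] mt(1) by (simp add: mult.commute)
  qed
  ultimately show ?case using H mt by auto
qed

lemma exists_quasi_prime:
  fixes T :: "'a::field set"
  assumes T: "subring T" and st: "semistar T st" and P: "is_submod T P" "P \<subseteq> T"
    and p0: "p0 \<in> P" "p0 \<noteq> 0"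
    and good: "\<forall>F\<in>ffg T. F \<subseteq> P \<longrightarrow> 1 \<notin> st F"
  shows "\<exists>M. quasi_prime T (star_f T st) M \<and> P \<subseteq> M"
proof -
  define \<A> where "\<A> = {I. is_submod T I \<and> I \<subseteq> T \<and> P \<subseteq> I \<and> (\<forall>F\<in>ffg T. F \<subseteq> I \<longrightarrow> 1 \<notin> st F)}"
  have "P \<in> \<A>" using assms unfolding \<A>_def by auto
  have "\<exists>M\<in>\<A>. \<forall>X\<in>\<A>. M \<subseteq> X \<longrightarrow> X = M"
  proof (rule subset_Zorn_nonempty)
    show "\<A> \<noteq> {}" using \<open>P\<in>\<A>\<close> by blast
    fix C assume C: "C \<noteq> {}" "subset.chain \<A> C"
    have CA: "C \<subseteq> \<A>" and ch: "\<And>I J. I \<in> C \<Longrightarrow> J \<in> C \<Longrightarrow> I \<subseteq> J \<or> J \<subseteq> I"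
      using C(2) unfolding subset.chain_def by auto
    have Csub: "\<And>I. I \<in> C \<Longrightarrow> is_submod T I \<and> I \<subseteq> T \<and> P \<subseteq> I \<and> (\<forall>F\<in>ffg T. F \<subseteq> I \<longrightarrow> 1 \<notin> st F)"
      using CA unfolding \<A>_def by blast
    obtain I0 where I0: "I0 \<in> C" using C(1) by blast
    show "\<Union>C \<in> \<A>" unfolding \<A>_def
    proof (intro CollectI conjI ballI impI)
      show "is_submod T (\<Union>C)" unfolding is_submod_def
      proof (intro conjI ballI)
        show "0 \<in> \<Union>C" using I0 Csub submod_0 by blast
        fix x y assume "x \<in> \<Union>C" "y \<in> \<Union>C"
        then obtain I J where IJ: "I \<in> C" "J \<in> C" "x \<in> I" "y \<in> J" by blast
        show "x + y \<in> \<Union>C"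
        proof (cases "I \<subseteq> J")
          case True
          then show ?thesis using IJ Csub[of J] submod_add[of T J x y] by blast
        next
          case False
          then have "J \<subseteq> I" using ch IJ by blast
          then show ?thesis using IJ Csub[of I] submod_add[of T I x y] by blast
        qed
      next
        fix r x assume "r \<in> T" "x \<in> \<Union>C"
        then obtain I where "I \<in> C" "x \<in> I" by blast
        then show "r * x \<in> \<Union>C" using Csub[of I] submod_mult[of T I r x] \<open>r \<in> T\<close> by blast
      qed
      show "\<Union>C \<subseteq> T" using Csub by blast
      show "P \<subseteq> \<Union>C" using Csub I0 by blast
      fix F assume F: "F \<in> ffg T" "F \<subseteq> \<Union>C"
      then obtain G where G: "finite G" "F = generated T G" unfolding ffg_def by blast
      have "G \<subseteq> \<Union>C" using G F gen_sup[of G T] by blast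
      then obtain B where B: "B \<in> C" "G \<subseteq> B"
        using finite_subset_Union_chain[OF G(1) _ C(1) C(2)] by blast
      have "F \<subseteq> B" using G B Csub[of B] gen_least[of T B G] by blast
      then show "1 \<notin> st F" using Csub[of B] B F by blast
    qed
  qed
  then obtain M where M: "M \<in> \<A>" and max: "\<And>X. X \<in> \<A> \<Longrightarrow> M \<subseteq> X \<Longrightarrow> X = M" by blast
  from M have Ms: "is_submod T M" and MT: "M \<subseteq> T" and PM: "P \<subseteq> M"
    and Mgood: "\<And>F. F \<in> ffg T \<Longrightarrow> F \<subseteq> M \<Longrightarrow> 1 \<notin> st F"
    unfolding \<A>_def by auto
  have bad: "1 \<notin> st (generated T H)" if "finite H" "H \<subseteq> M" "generated T H \<noteq> {0}" for H
  proof -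
    have "generated T H \<subseteq> M" using gen_least[of T M H] Ms that(2) by blast
    then show ?thesis using Mgood ffgI[of H T] that by blast
  qed
  have K1: "\<exists>H. finite H \<and> H \<subseteq> M \<and> 1 \<in> st (generated T (insert x H))" if x: "x \<in> T" "x \<notin> M" for x
  proof -
    define N where "N = {m + x * t | m t. m \<in> M \<and> t \<in> T}"
    have Ns: "is_submod T N" unfolding is_submod_def
    proof (intro conjI ballI)
      show "0 \<in> N" unfolding N_def using submod_0[OF Ms] subring_0[OF T]
        by (intro CollectI exI[of _ 0]) simp
      fix u v assume "u \<in> N" "v \<in> N"
      then obtain m1 t1 m2 t2 where "u = m1 + x * t1" "v = m2 + x * t2" "m1 \<in> M" "m2 \<in> M" "t1 \<in> T" "t2 \<in> T"
        unfolding N_def by blast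
      then have "u + v = (m1 + m2) + x * (t1 + t2)" "m1 + m2 \<in> M" "t1 + t2 \<in> T"
        using submod_add[OF Ms, of m1 m2] subring_add[OF T, of t1 t2] by (simp_all add: algebra_simps)
      then show "u + v \<in> N" unfolding N_def by blast
    next
      fix r u assume r: "r \<in> T" "u \<in> N"
      then obtain m1 t1 where "u = m1 + x * t1" "m1 \<in> M" "t1 \<in> T"
        unfolding N_def by blast
      then have "r * u = (r * m1) + x * (r * t1)" "r * m1 \<in> M" "r * t1 \<in> T"
        using submod_mult[OF Ms r(1), of m1] subring_mult[OF T r(1), of t1] by (simp_all add: algebra_simps)
      then show "r * u \<in> N" unfolding N_def by blast
    qed
    have NT: "N \<subseteq> T"
    proof
      fix u assume "u \<in> N"
      then obtain m1 t1 where "u = m1 + x * t1" "m1 \<in> M" "t1 \<in> T" unfolding N_def by blast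
      then show "u \<in> T" using MT subring_add[OF T] subring_mult[OF T] x(1) by blast
    qed
    have MN: "M \<subseteq> N"
    proof
      fix m assume "m \<in> M"
      then show "m \<in> N" unfolding N_def using subring_0[OF T]
        by (intro CollectI exI[of _ m] exI[of _ 0]) simp
    qed
    have xN: "x \<in> N" unfolding N_def using subring_1[OF T] submod_0[OF Ms]
      by (intro CollectI exI[of _ 0] exI[of _ 1]) simp
    have "N \<notin> \<A>"
    proof
      assume "N \<in> \<A>"
      then have "N = M" using max MN by blast
      then show False using xN x by blast
    qed
    then obtain F where F: "F \<in> ffg T" "F \<subseteq> N" "1 \<in> st F"
      unfolding \<A>_def using Ns NT MN PM by blast
    then obtain G where G: "finite G" "F = generated T G" unfolding ffg_def by blast
    have GN: "G \<subseteq> N" using G F gen_sup[of G T] by blast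
    obtain H where H: "finite H" "H \<subseteq> M" "G \<subseteq> generated T (insert x H)"
      using fin_decomp[OF G(1) GN[unfolded N_def]] by blast
    have FH: "F \<subseteq> generated T (insert x H)" using G H gen_least[of T "generated T (insert x H)" G] gen_submod[of T "insert x H"] by blast
    have "x \<noteq> 0" using x submod_0[OF Ms] by blast
    then have "generated T (insert x H) \<in> Fbar T"
      using ffg_Fbar ffgI[of "insert x H" T] gen_nonzero[of x "insert x H" T] H(1) by blast
    then have "st F \<subseteq> st (generated T (insert x H))"
      using semistar_mono[OF st] ffg_Fbar F(1) FH by blast
    then show ?thesis using F(3) H by blast
  qed
  have K2: False if "finite H1" "H1 \<subseteq> M" "generated T H1 \<noteq> {0}" "b \<in> st (generated T H1)"
    "finite H2" "H2 \<subseteq> M" "b \<noteq> 0" "1 \<in> st (generated T (insert b H2))" for b H1 H2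
  proof -
    let ?U = "generated T (H1 \<union> H2)"
    let ?E = "st ?U"
    have g1: "generated T H1 \<subseteq> ?U" by (rule gen_mono) blast
    then have Unz: "?U \<noteq> {0}" using that(3) gen_submod submod_0 by blast
    have UF: "?U \<in> Fbar T" using ffg_Fbar ffgI[of "H1 \<union> H2" T] Unz that(1,5) by blast
    have H1F: "generated T H1 \<in> Fbar T" using ffg_Fbar ffgI[of H1 T] that(1,3) by blast
    have Es: "is_submod T ?E" using semistar_submod[OF st UF] .
    have "st (generated T H1) \<subseteq> ?E" using semistar_mono[OF st H1F UF g1] .
    then have bE: "b \<in> ?E" using that(4) by blast
    have "H2 \<subseteq> ?U" using gen_sup[of "H1 \<union> H2" T] by blast
    then have "H2 \<subseteq> ?E" using semistar_ext[OF st UF] by blast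
    then have "generated T (insert b H2) \<subseteq> ?E" using bE Es gen_least[of T ?E "insert b H2"] by blast
    moreover have "generated T (insert b H2) \<in> Fbar T"
      using ffg_Fbar ffgI[of "insert b H2" T] gen_nonzero[of b "insert b H2" T] that(5,7) by blast
    moreover have "?E \<in> Fbar T" using semistar_Fbar[OF st UF] .
    ultimately have "st (generated T (insert b H2)) \<subseteq> st ?E" using semistar_mono[OF st] by blast
    also have "\<dots> = ?E" using semistar_idem[OF st UF] .
    finally have "1 \<in> ?E" using that(8) by blast
    moreover have "1 \<notin> ?E" using bad[of "H1 \<union> H2"] that Unz by blast
    ultimately show False by blast
  qed
  have M0: "0 \<in> M" using submod_0[OF Ms] .
  have one: "1 \<notin> M"
  proof
    assume "1 \<in> M"
    then have "1 \<notin> st (generated T {1})" using bad[of "{1}"] gen_nonzero[of 1 "{1}" T] by auto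
    moreover have "generated T {1} = T" using gen_one[OF T] .
    ultimately show False using semistar_ext[OF st R_Fbar[OF T]] subring_1[OF T] by auto
  qed
  have prime: "a \<in> M \<or> b \<in> M" if ab: "a \<in> T" "b \<in> T" "a * b \<in> M" for a b
  proof (rule ccontr)
    assume "\<not> (a \<in> M \<or> b \<in> M)"
    then have na: "a \<notin> M" and nb: "b \<notin> M" by auto
    have a0: "a \<noteq> 0" and b0: "b \<noteq> 0" using na nb M0 by auto
    obtain H1 where H1: "finite H1" "H1 \<subseteq> M" "1 \<in> st (generated T (insert a H1))" using K1[OF ab(1) na] by blast
    have GF: "generated T (insert a H1) \<in> Fbar T" using ffg_Fbar ffgI[of "insert a H1" T] gen_nonzero[of a "insert a H1" T] a0 H1(1) by blast
    let ?H3 = "(\<lambda>y. b * y) ` insert a H1"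
    have "b * 1 \<in> (\<lambda>y. b * y) ` st (generated T (insert a H1))" using H1(3) by blast
    also have "\<dots> = st ((\<lambda>y. b * y) ` generated T (insert a H1))" using semistar_scale[OF st GF b0] by simp
    also have "\<dots> = st (generated T ?H3)" using scale_gen[OF b0] by simp
    finally have bin: "b \<in> st (generated T ?H3)" by simp
    have H3M: "?H3 \<subseteq> M"
    proof
      fix z assume "z \<in> ?H3"
      then obtain h where h: "h \<in> insert a H1" "z = b * h" by blast
      show "z \<in> M"
      proof (cases "h = a")
        case True
        then show ?thesis using h ab(3) by (simp add: mult.commute)
      next
        case False
        then have "h \<in> M" using h H1(2) by blast
        then show ?thesis using h submod_mult[OF Ms ab(2)] by blast
      qed
    qed
    have "b * a \<noteq> 0" using a0 b0 by simp
    then have H3nz: "generated T ?H3 \<noteq> {0}" using gen_nonzero[of "b * a" ?H3 T] by blast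
    obtain H2 where H2: "finite H2" "H2 \<subseteq> M" "1 \<in> st (generated T (insert b H2))" using K1[OF ab(2) nb] by blast
    show False using K2[of ?H3 b H2] H1(1) H3M H3nz bin H2 b0 by blast
  qed
  have quasi: "star_f T st M \<inter> T = M"
  proof
    show "M \<subseteq> star_f T st M \<inter> T"
    proof
      fix m assume m: "m \<in> M"
      let ?F = "generated T {p0, m}"
      have "?F \<in> ffg T" using ffgI[of "{p0, m}" T] gen_nonzero[of p0 "{p0, m}" T] p0 by auto
      moreover have "?F \<subseteq> M" using gen_least[OF Ms, of "{p0, m}"] m p0 PM by blast
      moreover have "m \<in> st ?F" using semistar_ext[OF st ffg_Fbar[OF calculation(1)]] gen_sup[of "{p0, m}" T] by blast
      ultimately show "m \<in> star_f T st M \<inter> T" using star_fI[where st=st and F="?F"] m MT by blast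
    qed
    show "star_f T st M \<inter> T \<subseteq> M"
    proof
      fix x assume x: "x \<in> star_f T st M \<inter> T"
      show "x \<in> M"
      proof (rule ccontr)
        assume xM: "x \<notin> M"
        obtain F where F: "x \<in> st F" "F \<in> ffg T" "F \<subseteq> M" using x by (meson IntD1 star_fE)
        then obtain G where G: "finite G" "F = generated T G" "F \<noteq> {0}" unfolding ffg_def by blast
        have "G \<subseteq> M" using G F gen_sup[of G T] by blast
        obtain H2 where H2: "finite H2" "H2 \<subseteq> M" "1 \<in> st (generated T (insert x H2))" using K1[of x] x xM by blast
        have "x \<noteq> 0" using xM M0 by blast
        then show False using K2[of G x H2] G \<open>G \<subseteq> M\<close> F H2 by blast
      qed
    qed
  qed
  have "quasi_prime T (star_f T st) M"
    unfolding quasi_prime_def prime_ideal_def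
    using MT Ms one subring_1[OF T] prime quasi p0 PM by blast
  then show ?thesis using PM by blast
qed



lemma colon_submod: "subring T \<Longrightarrow> is_submod T (colon T E)"
  unfolding is_submod_def colon_def
  by (auto simp: distrib_right mult.assoc intro: subring_0 subring_add subring_mult)

lemma colon_anti: "E \<subseteq> E' \<Longrightarrow> colon T E' \<subseteq> colon T E"
  unfolding colon_def by blast

lemma sub_v: "E \<subseteq> v_op T E"
  unfolding v_op_def colon_def by (auto simp: mult.commute)

lemma v_mono: "E \<subseteq> E' \<Longrightarrow> v_op T E \<subseteq> v_op T E'"
  unfolding v_op_def by (intro colon_anti)

lemma v_idem: "v_op T (v_op T E) = v_op T E"
proof
  show "v_op T E \<subseteq> v_op T (v_op T E)" by (rule sub_v)
  have "colon T E \<subseteq> v_op T (colon T E)" by (rule sub_v)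
  then have "colon T (v_op T (colon T E)) \<subseteq> colon T (colon T E)" by (rule colon_anti)
  then show "v_op T (v_op T E) \<subseteq> v_op T E" unfolding v_op_def .
qed

lemma colon_scale_iff: "z \<in> colon T ((\<lambda>y. x * y) ` E) \<longleftrightarrow> z * x \<in> colon T E"
  unfolding colon_def by (simp add: mult.assoc)

lemma v_scale_iff:
  fixes x :: "'a::field"
  assumes x: "x \<noteq> 0"
  shows "w \<in> v_op T ((\<lambda>y. x * y) ` E) \<longleftrightarrow> w * inverse x \<in> v_op T E"
proof
  assume w: "w \<in> v_op T ((\<lambda>y. x * y) ` E)"
  show "w * inverse x \<in> v_op T E"
    unfolding v_op_def colon_def[of T "colon T E"]
  proof (intro CollectI ballI)
    fix z' assume z': "z' \<in> colon T E"
    have "z' * inverse x * x = z'" using x by (simp add: field_simps)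
    then have "z' * inverse x \<in> colon T ((\<lambda>y. x * y) ` E)" using z' colon_scale_iff by metis
    then have "w * (z' * inverse x) \<in> T" using w unfolding v_op_def colon_def[of T "colon T _"] by blast
    then show "w * inverse x * z' \<in> T" by (simp add: ac_simps)
  qed
next
  assume w: "w * inverse x \<in> v_op T E"
  show "w \<in> v_op T ((\<lambda>y. x * y) ` E)"
    unfolding v_op_def colon_def[of T "colon T _"]
  proof (intro CollectI ballI)
    fix z assume z: "z \<in> colon T ((\<lambda>y. x * y) ` E)"
    then have "z * x \<in> colon T E" using colon_scale_iff by metis
    then have "w * inverse x * (z * x) \<in> T" using w unfolding v_op_def colon_def[of T "colon T E"] by blast
    moreover have "w * inverse x * (z * x) = w * z" using x by (simp add: field_simps)
    ultimately show "w * z \<in> T" by simp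
  qed
qed

lemma v_scale:
  fixes x :: "'a::field"
  assumes x: "x \<noteq> 0"
  shows "v_op T ((\<lambda>y. x * y) ` E) = (\<lambda>y. x * y) ` v_op T E"
proof (intro equalityI subsetI)
  fix w assume "w \<in> v_op T ((\<lambda>y. x * y) ` E)"
  then have "w * inverse x \<in> v_op T E" using v_scale_iff[OF x] by blast
  moreover have "w = x * (w * inverse x)" using x by (simp add: field_simps)
  ultimately show "w \<in> (\<lambda>y. x * y) ` v_op T E" by blast
next
  fix w assume "w \<in> (\<lambda>y. x * y) ` v_op T E"
  then obtain u where u: "u \<in> v_op T E" "w = x * u" by blast
  then have "w * inverse x = u" using x by (simp add: field_simps)
  then show "w \<in> v_op T ((\<lambda>y. x * y) ` E)" using v_scale_iff[OF x, of w T E] u(1) by simp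
qed

lemma v_submod: "subring T \<Longrightarrow> is_submod T (v_op T E)"
  unfolding v_op_def by (rule colon_submod)

lemma semistar_v:
  fixes T :: "'a::field set"
  assumes T: "subring T"
  shows "semistar T (v_op T)"
proof -
  have A: "v_op T E \<in> Fbar T" if E: "E \<in> Fbar T" for E
  proof -
    have "E \<subseteq> v_op T E" by (rule sub_v)
    moreover have "E \<noteq> {0}" "0 \<in> E" using E Fbar_submod submod_0 unfolding Fbar_def by auto
    ultimately have "v_op T E \<noteq> {0}" by blast
    then show "v_op T E \<in> Fbar T" unfolding Fbar_def using v_submod[OF T] by blast
  qed
  have B: "v_op T ((\<lambda>y. x * y) ` E) = (\<lambda>y. x * y) ` v_op T E" if "x \<noteq> 0" for x :: 'a and E
    using that by (rule v_scale)
  show ?thesis unfolding semistar_def by (simp add: A B v_mono sub_v v_idem)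
qed

lemma colon_self: "subring R \<Longrightarrow> colon R R = R"
proof
  assume R: "subring R"
  show "colon R R \<subseteq> R" unfolding colon_def using subring_1[OF R] by force
  show "R \<subseteq> colon R R" unfolding colon_def using subring_mult[OF R] by blast
qed

lemma v_self: "subring R \<Longrightarrow> v_op R R = R"
  unfolding v_op_def by (simp add: colon_self)

lemma t_ffg: "subring R \<Longrightarrow> F \<in> ffg R \<Longrightarrow> t_op R F = v_op R F"
  unfolding t_op_def using star_f_ffg semistar_v by blast

lemma t_self: "subring R \<Longrightarrow> t_op R R = R"
  using t_ffg[OF _ R_ffg] v_self by metis

lemma t_mono: "E \<subseteq> E' \<Longrightarrow> t_op R E \<subseteq> t_op R E'"
  unfolding t_op_def by (rule star_f_mono)

lemma loc_sub: "A \<subseteq> B \<Longrightarrow> (\<And>s. s \<in> A \<Longrightarrow> s \<notin> P \<Longrightarrow> s \<notin> Q) \<Longrightarrow> loc A P \<subseteq> loc B Q"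
  unfolding loc_def by blast

lemma gen_gen: "T \<subseteq> S \<Longrightarrow> generated S (generated T X) = generated S X"
proof
  assume TS: "T \<subseteq> S"
  have "generated T X \<subseteq> generated S X"
    using gen_least[OF submod_mono[OF gen_submod TS] gen_sup] .
  then show "generated S (generated T X) \<subseteq> generated S X"
    using gen_least[OF gen_submod] by blast
  show "generated S X \<subseteq> generated S (generated T X)" using gen_mono[OF gen_sup] .
qed

lemma ffg_gen: "T \<subseteq> S \<Longrightarrow> F \<in> ffg T \<Longrightarrow> generated S F \<in> ffg S"
proof -
  assume TS: "T \<subseteq> S" and F: "F \<in> ffg T"
  then obtain G where G: "finite G" "F = generated T G" "F \<noteq> {0}" unfolding ffg_def by blast
  have "F \<subseteq> generated S F" by (rule gen_sup)
  moreover have "0 \<in> F" using G gen_submod submod_0 by blast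
  ultimately have "generated S F \<noteq> {0}" using G(3) by blast
  then show ?thesis using gen_gen[OF TS, of G] G unfolding ffg_def by auto
qed

lemma part_e:
  assumes D: "subring D" and st1: "semistar D st1" and st2: "semistar D st2"
    and le: "star_le D (star_f D st1) (star_f D st2)" and fl: "flat D T st2 st'"
  shows "flat D T st1 st'"
  unfolding flat_def
proof (intro conjI)
  show "\<forall>Q. quasi_prime T (star_f T st') Q \<longrightarrow> loc D (Q \<inter> D) = loc T Q"
    using fl unfolding flat_def by blast
  show "linked D T st1 st'"
    unfolding linked_def
  proof (intro ballI impI)
    fix F assume F: "F \<in> ffg D" "F \<subseteq> D" "st1 F = st1 D"
    have FF: "F \<in> Fbar D" using ffg_Fbar F(1) .
    have DF: "D \<in> Fbar D" using R_Fbar[OF D] .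
    have "1 \<in> st1 D" using semistar_ext[OF st1 DF] subring_1[OF D] by blast
    then have "1 \<in> star_f D st1 F" using F star_f_ffg[OF st1 F(1)] by simp
    then have "1 \<in> star_f D st2 F" using le FF unfolding star_le_def by blast
    then have one: "1 \<in> st2 F" using star_f_ffg[OF st2 F(1)] by simp
    have "D \<subseteq> st2 F"
    proof
      fix r assume "r \<in> D"
      then have "r * 1 \<in> st2 F" using submod_mult[OF semistar_submod[OF st2 FF]] one by blast
      then show "r \<in> st2 F" by simp
    qed
    then have "st2 D \<subseteq> st2 (st2 F)" using semistar_mono[OF st2 DF semistar_Fbar[OF st2 FF]] by blast
    also have "\<dots> = st2 F" using semistar_idem[OF st2 FF] .
    finally have "st2 F = st2 D" using semistar_mono[OF st2 FF DF F(2)] by blast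
    then show "st' (generated T F) = st' T" using fl F unfolding flat_def linked_def by blast
  qed
qed

lemma part_h:
  assumes DT: "D \<subseteq> T" and TS: "T \<subseteq> S" and fl: "flat D S st st''" and lk: "linked T S st' st''"
  shows "flat T S st' st''"
  unfolding flat_def
proof (intro conjI allI impI)
  show "linked T S st' st''" by (rule lk)
  fix Q assume Q: "quasi_prime S (star_f S st'') Q"
  then have e: "loc D (Q \<inter> D) = loc S Q" using fl unfolding flat_def by blast
  have "loc D (Q \<inter> D) \<subseteq> loc T (Q \<inter> T)" using DT by (intro loc_sub) auto
  moreover have "loc T (Q \<inter> T) \<subseteq> loc S Q" using TS by (intro loc_sub) auto
  ultimately show "loc T (Q \<inter> T) = loc S Q" using e by blast
qed



lemma quasi_primeD:
  assumes "quasi_prime R st Q"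
  shows "Q \<subseteq> R" "is_submod R Q" "Q \<noteq> R" "\<And>a b. a \<in> R \<Longrightarrow> b \<in> R \<Longrightarrow> a * b \<in> Q \<Longrightarrow> a \<in> Q \<or> b \<in> Q"
    "Q \<noteq> {0}" "st Q \<inter> R = Q"
  using assms unfolding quasi_prime_def prime_ideal_def by auto

lemma one_notin_prime:
  assumes "subring R" "quasi_prime R st Q" shows "1 \<notin> Q"
proof
  assume "1 \<in> Q"
  then have "R \<subseteq> Q" using submod_mult[OF quasi_primeD(2)[OF assms(2)], of _ 1] by force
  then show False using quasi_primeD(1,3)[OF assms(2)] by blast
qed

lemma loc_one: "subring R \<Longrightarrow> 1 \<notin> Q \<Longrightarrow> a \<in> R \<Longrightarrow> a \<in> loc R Q"
  unfolding loc_def using subring_1 by (intro CollectI exI[of _ a] exI[of _ 1]) auto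

lemma nonzero_in_D:
  assumes qf: "quotient_field_is_UNIV D" and D: "subring D" and DS: "D \<subseteq> S"
    and Q: "is_submod S Q" "Q \<noteq> {0}"
  shows "\<exists>a\<in>D. a \<in> Q \<and> a \<noteq> 0"
proof -
  obtain q where q: "q \<in> Q" "q \<noteq> 0" using Q submod_0 by blast
  obtain a b where ab: "a \<in> D" "b \<in> D" "b \<noteq> 0" "q = a / b" using qf unfolding quotient_field_is_UNIV_def by blast
  have "b * q \<in> Q" using submod_mult[OF Q(1) _ q(1)] ab DS by blast
  moreover have "b * q = a" using ab by simp
  moreover have "a \<noteq> 0" using ab q by auto
  ultimately show ?thesis using ab by blast
qed

lemma part_b:
  fixes D T S :: "'a::field set"
  assumes D: "subring D" and qf: "quotient_field_is_UNIV D"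
    and DT: "overring D T" and TS: "overring T S"
    and st': "semistar T st'" and st'': "semistar S st''"
    and flTS: "flat T S st' st''" and flDT: "flat D T st st'"
  shows "flat D S st st''"
proof -
  have T: "subring T" and DT': "D \<subseteq> T" using DT unfolding overring_def by auto
  have S: "subring S" and TS': "T \<subseteq> S" using TS unfolding overring_def by auto
  have lkTS: "linked T S st' st''" and lkDT: "linked D T st st'"
    using flTS flDT unfolding flat_def by auto
  show ?thesis unfolding flat_def
  proof (intro conjI allI impI)
    show "linked D S st st''" unfolding linked_def
    proof (intro ballI impI)
      fix F assume F: "F \<in> ffg D" "F \<subseteq> D" "st F = st D"
      then have e1: "st' (generated T F) = st' T" using lkDT unfolding linked_def by blast
      have g1: "generated T F \<in> ffg T" using ffg_gen[OF DT' F(1)] .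
      have g2: "generated T F \<subseteq> T" using gen_least[OF subring_submod[OF T]] F(2) DT' by blast
      have "st'' (generated S (generated T F)) = st'' S" using lkTS g1 g2 e1 unfolding linked_def by blast
      then show "st'' (generated S F) = st'' S" using gen_gen[OF TS'] by simp
    qed
  next
    fix Q assume Q: "quasi_prime S (star_f S st'') Q"
    have h1: "loc T (Q \<inter> T) = loc S Q" using flTS Q unfolding flat_def by blast
    define P where "P = Q \<inter> T"
    have QS: "Q \<subseteq> S" and Qs: "is_submod S Q" and Qne: "Q \<noteq> S" and Qnz: "Q \<noteq> {0}"
      and Qpr: "\<And>a b. a \<in> S \<Longrightarrow> b \<in> S \<Longrightarrow> a * b \<in> Q \<Longrightarrow> a \<in> Q \<or> b \<in> Q"
      and Qq: "star_f S st'' Q \<inter> S = Q"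
      using quasi_primeD[OF Q] by auto
    have Q1: "1 \<notin> Q" using one_notin_prime[OF S Q] .
    have Ps: "is_submod T P" unfolding P_def is_submod_def
    proof (intro conjI ballI)
      show "0 \<in> Q \<inter> T" using submod_0[OF Qs] subring_0[OF T] by blast
      fix x y assume "x \<in> Q \<inter> T" "y \<in> Q \<inter> T"
      then show "x + y \<in> Q \<inter> T" using submod_add[OF Qs, of x y] subring_add[OF T, of x y] by blast
    next
      fix r x assume "r \<in> T" "x \<in> Q \<inter> T"
      then show "r * x \<in> Q \<inter> T" using submod_mult[OF Qs, of r x] subring_mult[OF T, of r x] TS' by blast
    qed
    have PT: "P \<subseteq> T" unfolding P_def by blast
    obtain p0 where p0: "p0 \<in> D" "p0 \<in> Q" "p0 \<noteq> 0"
      using nonzero_in_D[OF qf D _ Qs Qnz] DT' TS' by blast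
    have p0P: "p0 \<in> P" unfolding P_def using p0 DT' by blast
    have good: "\<forall>F\<in>ffg T. F \<subseteq> P \<longrightarrow> 1 \<notin> st' F"
    proof (intro ballI impI notI)
      fix F assume F: "F \<in> ffg T" "F \<subseteq> P" "1 \<in> st' F"
      have FF: "F \<in> Fbar T" using ffg_Fbar F(1) .
      have TF: "T \<in> Fbar T" using R_Fbar[OF T] .
      have "T \<subseteq> st' F"
      proof
        fix r assume "r \<in> T"
        then have "r * 1 \<in> st' F" using submod_mult[OF semistar_submod[OF st' FF]] F(3) by blast
        then show "r \<in> st' F" by simp
      qed
      then have "st' T \<subseteq> st' (st' F)" using semistar_mono[OF st' TF semistar_Fbar[OF st' FF]] by blast
      also have "\<dots> = st' F" using semistar_idem[OF st' FF] .
      finally have "st' F = st' T" using semistar_mono[OF st' FF TF] F(2) PT by blast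
      then have e: "st'' (generated S F) = st'' S" using lkTS F(1,2) PT unfolding linked_def by blast
      have "1 \<in> st'' S" using semistar_ext[OF st'' R_Fbar[OF S]] subring_1[OF S] by blast
      then have "1 \<in> st'' (generated S F)" using e by simp
      moreover have "generated S F \<in> ffg S" using ffg_gen[OF TS' F(1)] .
      moreover have "generated S F \<subseteq> Q" using gen_least[OF Qs] F(2) unfolding P_def by blast
      ultimately have "1 \<in> star_f S st'' Q" by (rule star_fI)
      then have "1 \<in> Q" using Qq subring_1[OF S] by blast
      then show False using Q1 by blast
    qed
    obtain M where M: "quasi_prime T (star_f T st') M" "P \<subseteq> M"
      using exists_quasi_prime[OF T st' Ps PT p0P p0(3) good] by blast
    have locM: "loc D (M \<inter> D) = loc T M" using flDT M(1) unfolding flat_def by blast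
    have M1: "1 \<notin> M" using one_notin_prime[OF T M(1)] .
    have M0: "0 \<in> M" using submod_0[OF quasi_primeD(2)[OF M(1)]] .
    have "loc D (Q \<inter> D) = loc T P"
    proof
      show "loc D (Q \<inter> D) \<subseteq> loc T P" unfolding P_def using DT' by (intro loc_sub) auto
      show "loc T P \<subseteq> loc D (Q \<inter> D)"
      proof
        fix z assume "z \<in> loc T P"
        then obtain a s where as: "z = a / s" "a \<in> T" "s \<in> T" "s \<notin> P" unfolding loc_def by blast
        have "a \<in> loc D (M \<inter> D)" using locM loc_one[OF T M1 as(2)] by simp
        then obtain a1 b1 where ab1: "a = a1 / b1" "a1 \<in> D" "b1 \<in> D" "b1 \<notin> M \<inter> D" unfolding loc_def by blast
        have "s \<in> loc D (M \<inter> D)" using locM loc_one[OF T M1 as(3)] by simp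
        then obtain a2 b2 where ab2: "s = a2 / b2" "a2 \<in> D" "b2 \<in> D" "b2 \<notin> M \<inter> D" unfolding loc_def by blast
        have b1M: "b1 \<notin> M" and b2M: "b2 \<notin> M" using ab1 ab2 by auto
        have b10: "b1 \<noteq> 0" and b20: "b2 \<noteq> 0" using b1M b2M M0 by auto
        have b1Q: "b1 \<notin> Q" using b1M M(2) ab1(3) DT' unfolding P_def by blast
        have b2Q: "b2 \<notin> Q" using b2M M(2) ab2(3) DT' unfolding P_def by blast
        have sQ: "s \<notin> Q" using as(3,4) unfolding P_def by blast
        have a2e: "a2 = s * b2" using ab2(1) b20 by simp
        have a2Q: "a2 \<notin> Q" using Qpr[of s b2] a2e sQ b2Q as(3) ab2(3) DT' TS' by blast
        have a20: "a2 \<noteq> 0" using a2Q submod_0[OF Qs] by blast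
        have dQ: "b1 * a2 \<notin> Q" using Qpr[of b1 a2] b1Q a2Q ab1(3) ab2(2) DT' TS' by blast
        have dD: "b1 * a2 \<in> D" using subring_mult[OF D] ab1 ab2 by blast
        have nD: "a1 * b2 \<in> D" using subring_mult[OF D] ab1 ab2 by blast
        have "z = (a1 * b2) / (b1 * a2)" using as(1) ab1(1) ab2(1) b10 b20 a20 by (simp add: field_simps)
        then show "z \<in> loc D (Q \<inter> D)" unfolding loc_def using dQ dD nD by blast
      qed
    qed
    then show "loc D (Q \<inter> D) = loc S Q" using h1 unfolding P_def by simp
  qed
qed



lemma mult_submod: "subring D \<Longrightarrow> is_submod D {z. c * z \<in> D}"
  unfolding is_submod_def
  by (auto simp: distrib_left mult.left_commute intro: subring_0 subring_add subring_mult)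

lemma fin_denom:
  assumes "finite G" and D: "subring D" and DT: "D \<subseteq> T"
    and pr: "\<And>a b. a \<in> T \<Longrightarrow> b \<in> T \<Longrightarrow> a * b \<in> M \<Longrightarrow> a \<in> M \<or> b \<in> M"
    and M1: "(1::'a::field) \<notin> M" and M0: "0 \<in> M"
    and h: "\<forall>g\<in>G. f g \<in> loc D (M \<inter> D)"
  shows "\<exists>s\<in>D. s \<notin> M \<and> (\<forall>g\<in>G. s * f g \<in> D)"
  using assms(1) h
proof (induction G rule: finite_induct)
  case empty
  then show ?case using subring_1[OF D] M1 by blast
next
  case (insert g G)
  then obtain s where s: "s \<in> D" "s \<notin> M" "\<forall>g\<in>G. s * f g \<in> D" by auto
  have "f g \<in> loc D (M \<inter> D)" using insert.prems by blast
  then obtain a s' where as: "f g = a / s'" "a \<in> D" "s' \<in> D" "s' \<notin> M \<inter> D" unfolding loc_def by blast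
  have s'M: "s' \<notin> M" using as by blast
  have s'0: "s' \<noteq> 0" using s'M M0 by blast
  have "s * s' \<notin> M" using pr[of s s'] s s'M as(3) DT by blast
  moreover have "s * s' \<in> D" using subring_mult[OF D] s as by blast
  moreover have "s * s' * f g \<in> D"
  proof -
    have "s * s' * f g = s * a" using as(1) s'0 by simp
    then show ?thesis using subring_mult[OF D] s as by simp
  qed
  moreover have "\<forall>g'\<in>G. s * s' * f g' \<in> D"
  proof
    fix g' assume "g' \<in> G"
    then have "s * f g' \<in> D" using s by blast
    then have "s' * (s * f g') \<in> D" using subring_mult[OF D] as(3) by blast
    then show "s * s' * f g' \<in> D" by (simp add: ac_simps)
  qed
  ultimately show ?case by blast
qed

lemma part3_fwd:
  fixes D T :: "'a::field set"
  assumes D: "subring D" and qf: "quotient_field_is_UNIV D" and DT: "overring D T"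
    and fl: "flat D T st (t_op T)"
  shows "flat D T (t_op D) (t_op T)"
proof -
  have T: "subring T" and DT': "D \<subseteq> T" using DT unfolding overring_def by auto
  have locQ: "\<forall>Q. quasi_prime T (star_f T (t_op T)) Q \<longrightarrow> loc D (Q \<inter> D) = loc T Q"
    using fl unfolding flat_def by blast
  have sf: "star_f T (t_op T) = star_f T (v_op T)" unfolding t_op_def by (rule star_f_star_f)
  have "linked D T (t_op D) (t_op T)" unfolding linked_def
  proof (intro ballI impI)
    fix F assume F: "F \<in> ffg D" "F \<subseteq> D" "t_op D F = t_op D D"
    have "1 \<in> v_op D F" using F(3) t_self[OF D] t_ffg[OF D F(1)] subring_1[OF D] by simp
    then have key: "z \<in> D" if "z \<in> colon D F" for z
      using that unfolding v_op_def colon_def[of D "colon D F"] by force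
    define F' where "F' = generated T F"
    have g1: "F' \<in> ffg T" unfolding F'_def using ffg_gen[OF DT' F(1)] .
    have g2: "F' \<subseteq> T" unfolding F'_def using gen_least[OF subring_submod[OF T]] F(2) DT' by blast
    have up: "t_op T F' \<subseteq> T" using t_mono[OF g2, of T] t_self[OF T] by simp
    have yT: "y \<in> T" if y: "y \<in> colon T F'" for y
    proof (rule ccontr)
      assume yT: "y \<notin> T"
      define J where "J = {t \<in> T. t * y \<in> T}"
      have Js: "is_submod T J" unfolding J_def is_submod_def
      proof (intro conjI ballI)
        show "0 \<in> {t \<in> T. t * y \<in> T}" using subring_0[OF T] by simp
        fix u v assume "u \<in> {t \<in> T. t * y \<in> T}" "v \<in> {t \<in> T. t * y \<in> T}"
        then show "u + v \<in> {t \<in> T. t * y \<in> T}" using subring_add[OF T, of u v] subring_add[OF T, of "u*y" "v*y"]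
          by (simp add: distrib_right)
      next
        fix r u assume "r \<in> T" "u \<in> {t \<in> T. t * y \<in> T}"
        then show "r * u \<in> {t \<in> T. t * y \<in> T}" using subring_mult[OF T, of r u] subring_mult[OF T, of r "u*y"]
          by (simp add: mult.assoc)
      qed
      have JT: "J \<subseteq> T" unfolding J_def by blast
      obtain a b where ab: "a \<in> D" "b \<in> D" "b \<noteq> 0" "y = a / b" using qf unfolding quotient_field_is_UNIV_def by blast
      have "b * y = a" using ab by simp
      then have bJ: "b \<in> J" unfolding J_def using ab DT' by auto
      have good: "\<forall>F0\<in>ffg T. F0 \<subseteq> J \<longrightarrow> 1 \<notin> v_op T F0"
      proof (intro ballI impI notI)
        fix F0 assume F0: "F0 \<in> ffg T" "F0 \<subseteq> J" "1 \<in> v_op T F0"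
        have "y \<in> colon T F0" unfolding colon_def using F0(2) unfolding J_def by (auto simp: mult.commute)
        then have "1 * y \<in> T" using F0(3) unfolding v_op_def colon_def[of T "colon T F0"] by blast
        then show False using yT by simp
      qed
      obtain M where M: "quasi_prime T (star_f T (v_op T)) M" "J \<subseteq> M"
        using exists_quasi_prime[OF T semistar_v[OF T] Js JT bJ ab(3) good] by blast
      have M': "quasi_prime T (star_f T (t_op T)) M" using M(1) sf by simp
      have locM: "loc D (M \<inter> D) = loc T M" using locQ M' by blast
      have M1: "1 \<notin> M" using one_notin_prime[OF T M'] .
      have M0: "0 \<in> M" using submod_0[OF quasi_primeD(2)[OF M']] .
      have Mpr: "\<And>a b. a \<in> T \<Longrightarrow> b \<in> T \<Longrightarrow> a * b \<in> M \<Longrightarrow> a \<in> M \<or> b \<in> M"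
        using quasi_primeD(4)[OF M'] by blast
      obtain G where G: "finite G" "F = generated D G" using F(1) unfolding ffg_def by blast
      have "\<forall>g\<in>G. y * g \<in> loc D (M \<inter> D)"
      proof
        fix g assume "g \<in> G"
        then have "g \<in> F'" unfolding F'_def using G(2) gen_sup[of G D] gen_sup[of F T] by blast
        then have "y * g \<in> T" using y unfolding colon_def by blast
        then show "y * g \<in> loc D (M \<inter> D)" using locM loc_one[OF T M1] by simp
      qed
      then obtain s where s: "s \<in> D" "s \<notin> M" "\<forall>g\<in>G. s * (y * g) \<in> D"
        using fin_denom[OF G(1) D DT' Mpr M1 M0, of "\<lambda>g. y * g"] by blast
      have "G \<subseteq> {z. (s * y) * z \<in> D}" using s(3) by (simp add: subset_iff mult.assoc)
      then have "F \<subseteq> {z. (s * y) * z \<in> D}" using G(2) gen_least[OF mult_submod[OF D]] by blast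
      then have "s * y \<in> colon D F" unfolding colon_def by blast
      then have "s * y \<in> D" by (rule key)
      then have "s \<in> J" unfolding J_def using s(1) DT' by blast
      then show False using M(2) s(2) by blast
    qed
    have "1 \<in> v_op T F'" unfolding v_op_def colon_def[of T "colon T F'"] using yT by simp
    then have "T \<subseteq> v_op T F'" using submod_mult[OF v_submod[OF T], of _ 1 F'] by force
    then have "T \<subseteq> t_op T F'" using t_ffg[OF T g1] by simp
    then show "t_op T (generated T F) = t_op T T" using up t_self[OF T] unfolding F'_def by blast
  qed
  then show ?thesis using locQ unfolding flat_def by blast
qed

lemma part3_bwd:
  fixes D T :: "'a::field set"
  assumes D: "subring D" and st: "semistar D st" and stD: "st D = D" and DT: "overring D T"
    and fl: "flat D T (t_op D) (t_op T)"
  shows "flat D T st (t_op T)"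
proof -
  have "linked D T st (t_op T)" unfolding linked_def
  proof (intro ballI impI)
    fix F assume F: "F \<in> ffg D" "F \<subseteq> D" "st F = st D"
    have FF: "F \<in> Fbar D" using ffg_Fbar F(1) .
    have DF: "D \<in> Fbar D" using R_Fbar[OF D] .
    have one: "1 \<in> st F" using F(3) stD subring_1[OF D] by simp
    have key: "z \<in> D" if z: "z \<in> colon D F" for z
    proof (cases "z = 0")
      case True
      then show ?thesis using subring_0[OF D] by simp
    next
      case False
      have zF: "(\<lambda>y. z * y) ` F \<subseteq> D" using z unfolding colon_def by blast
      obtain f where f: "f \<in> F" "f \<noteq> 0" using FF submod_0[OF Fbar_submod[OF FF]] unfolding Fbar_def by blast
      have "z * f \<noteq> 0" using f False by simp
      then have "(\<lambda>y. z * y) ` F \<noteq> {0}" using f by blast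
      then have zFF: "(\<lambda>y. z * y) ` F \<in> Fbar D" unfolding Fbar_def using scale_submod[OF Fbar_submod[OF FF]] by blast
      have "st ((\<lambda>y. z * y) ` F) \<subseteq> st D" using semistar_mono[OF st zFF DF zF] .
      moreover have "st ((\<lambda>y. z * y) ` F) = (\<lambda>y. z * y) ` st F" using semistar_scale[OF st FF False] .
      ultimately have "z * 1 \<in> D" using one stD by blast
      then show ?thesis by simp
    qed
    have "1 \<in> v_op D F" unfolding v_op_def colon_def[of D "colon D F"] using key by simp
    then have "D \<subseteq> v_op D F" using submod_mult[OF v_submod[OF D], of _ 1 F] by force
    then have "D \<subseteq> t_op D F" using t_ffg[OF D F(1)] by simp
    moreover have "t_op D F \<subseteq> t_op D D" using t_mono[OF F(2)] .
    ultimately have "t_op D F = t_op D D" using t_self[OF D] by blast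
    then show "t_op T (generated T F) = t_op T T" using fl F unfolding flat_def linked_def by blast
  qed
  then show ?thesis using fl unfolding flat_def by blast
qed


theorem lemma4p2:
  fixes D T S :: "'a::field set"
  assumes "subring D" and "quotient_field_is_UNIV D"
    and "overring D T" and "overring T S"
  shows "(\<forall>st st' st''. semistar D st \<longrightarrow> semistar T st' \<longrightarrow> semistar S st'' \<longrightarrow>
            flat T S st' st'' \<longrightarrow> flat D T st st' \<longrightarrow> flat D S st st'')
       \<and> (\<forall>st1 st2 st'. semistar D st1 \<longrightarrow> semistar D st2 \<longrightarrow> semistar T st' \<longrightarrow>
            star_le D (star_f D st1) (star_f D st2) \<longrightarrow>
            flat D T st2 st' \<longrightarrow> flat D T st1 st')
       \<and> (\<forall>st. semistar D st \<longrightarrow> st D = D \<longrightarrow>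
            (flat D T st (t_op T) \<longleftrightarrow> flat D T (t_op D) (t_op T)))
       \<and> (\<forall>st st' st''. semistar D st \<longrightarrow> semistar T st' \<longrightarrow> semistar S st'' \<longrightarrow>
            flat D S st st'' \<longrightarrow> (flat T S st' st'' \<longleftrightarrow> linked T S st' st''))"
proof -
  have DT': "D \<subseteq> T" and TS': "T \<subseteq> S" using assms(3,4) unfolding overring_def by auto
  have c1: "\<forall>st st' st''. semistar D st \<longrightarrow> semistar T st' \<longrightarrow> semistar S st'' \<longrightarrow>
            flat T S st' st'' \<longrightarrow> flat D T st st' \<longrightarrow> flat D S st st''"
    using part_b[OF assms(1) assms(2) assms(3) assms(4)] by blast
  have c2: "\<forall>st1 st2 st'. semistar D st1 \<longrightarrow> semistar D st2 \<longrightarrow> semistar T st' \<longrightarrow>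
            star_le D (star_f D st1) (star_f D st2) \<longrightarrow>
            flat D T st2 st' \<longrightarrow> flat D T st1 st'"
    using part_e[OF assms(1)] by blast
  have c3: "\<forall>st. semistar D st \<longrightarrow> st D = D \<longrightarrow>
            (flat D T st (t_op T) \<longleftrightarrow> flat D T (t_op D) (t_op T))"
    using part3_fwd[OF assms(1) assms(2) assms(3)] part3_bwd[OF assms(1) _ _ assms(3)] by blast
  have c4: "\<forall>st st' st''. semistar D st \<longrightarrow> semistar T st' \<longrightarrow> semistar S st'' \<longrightarrow>
            flat D S st st'' \<longrightarrow> (flat T S st' st'' \<longleftrightarrow> linked T S st' st'')"
    using part_h[OF DT' TS'] unfolding flat_def[of T S] by blast
  show ?thesis using c1 c2 c3 c4 by blast
qed

end
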